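(* Let $\tau_\mathsf{I} \geq 0$ and $\tau_\mathsf{D} \in [0,1)$ be real numbers and define $$\delta_\mathsf{ID}(\tau_\mathsf{I},\tau_\mathsf{D}) = \frac{\tau_\mathsf{I}+\tau_\mathsf{D}(1-\tau_\mathsf{D})}{\tau_\mathsf{I}+1-\tau_\mathsf{D}} = 1 - \frac{(1-\tau_\mathsf{D})^2}{\tau_\mathsf{I}+1-\tau_\mathsf{D}}.$$ Let $C\subseteq\Sigma^n$ (with $\Sigma$ a finite alphabet and $|C|\ge 2$) be a code of minimum Levenshtein distance $d = 2\delta n$ with $\delta > \delta_\mathsf{ID}(\tau_\mathsf{I},\tau_\mathsf{D})$, and put $\gamma = \delta - \delta_\mathsf{ID}(\tau_\mathsf{I},\tau_\mathsf{D})>0$. Then $C$ is $(\lfloor\tau_\mathsf{I} n\rfloor, \lfloor\tau_\mathsf{D} n\rfloor, \ell)$-list decodable for $$\ell = \left\lfloor \frac{\delta(\tau_\mathsf{I}+1)}{\gamma\,(\tau_\mathsf{I} + 1-\tau_\mathsf{D})}\right\rfloor.$$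
   Context: For words $x,y$ over $\Sigma$, the Levenshtein distance $d_\mathsf{L}(x,y)$ is the minimum number of single-symbol insertions and deletions needed to transform $x$ into $y$; the minimum Levenshtein distance of a code $C$ is $\min\{d_\mathsf{L}(c_1,c_2): c_1\neq c_2 \in C\}$. For a word $v$ and non-negative integers $a,b$, $B_\mathsf{L}(v,a,b)$ is the set of words obtainable from $v$ by at most $a$ insertions and at most $b$ deletions. A code $C\subseteq \Sigma^n$ is $(t_\mathsf{I},t_\mathsf{D},\ell)$-list decodable if $|B_\mathsf{L}(v,t_\mathsf{D},t_\mathsf{I})\cap C|\le \ell$ for every word $v$ over $\Sigma$ (of any length). *)

theory Defs
  imports Complex_Main
begin

inductive ins_del :: "nat \<Rightarrow> nat \<Rightarrow> 'a list \<Rightarrow> 'a list \<Rightarrow> bool" where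
  refl: "ins_del 0 0 x x"
| ins: "ins_del i j x (u @ v) \<Longrightarrow> ins_del (Suc i) j x (u @ c # v)"
| del: "ins_del i j x (u @ c # v) \<Longrightarrow> ins_del i (Suc j) x (u @ v)"

definition lev_dist :: "'a list \<Rightarrow> 'a list \<Rightarrow> nat" where
  "lev_dist x y = (LEAST k. \<exists>i j. i + j = k \<and> ins_del i j x y)"

definition min_lev_dist :: "'a list set \<Rightarrow> nat" where
  "min_lev_dist C = Min {lev_dist c1 c2 | c1 c2. c1 \<in> C \<and> c2 \<in> C \<and> c1 \<noteq> c2}"

definition lev_ball :: "'a list \<Rightarrow> nat \<Rightarrow> nat \<Rightarrow> 'a list set" where
  "lev_ball v a b = {w. \<exists>i j. i \<le> a \<and> j \<le> b \<and> ins_del i j v w}"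

definition list_decodable :: "'a list set \<Rightarrow> nat \<Rightarrow> nat \<Rightarrow> nat \<Rightarrow> bool" where
  "list_decodable C tI tD l \<longleftrightarrow> (\<forall>v. card (lev_ball v tD tI \<inter> C) \<le> l)"

definition delta_ID :: "real \<Rightarrow> real \<Rightarrow> real" where
  "delta_ID tauI tauD = (tauI + tauD * (1 - tauD)) / (tauI + 1 - tauD)"

end

theory Submission
  imports Defs "HOL-Library.Sublist"
begin


lemma ins_del_len: "ins_del i j x y \<Longrightarrow> length x + i = length y + j"
  by (induction rule: ins_del.induct) auto

lemma ins_del_trans: "ins_del i' j' y z \<Longrightarrow> ins_del i j x y \<Longrightarrow> ins_del (i+i') (j+j') x z"
proof (induction rule: ins_del.induct)
  case (refl x) then show ?case by simp
next
  case (ins i j x u v c) then show ?case using ins_del.ins by fastforce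
next
  case (del i j x u c v) then show ?case using ins_del.del by fastforce
qed

lemma ins_del_Cons: "ins_del i j x y \<Longrightarrow> ins_del i j (a#x) (a#y)"
proof (induction rule: ins_del.induct)
  case (refl x) then show ?case by (rule ins_del.refl)
next
  case (ins i j x u v c) then show ?case using ins_del.ins[of i j "a#x" "a#u" v c] by simp
next
  case (del i j x u c v) then show ?case using ins_del.del[of i j "a#x" "a#u" c v] by simp
qed

lemma del_one: "ins_del 0 1 (u @ c # v) (u @ v)"
  using ins_del.del[OF ins_del.refl] by simp

lemma ins_one: "ins_del 1 0 (u @ v) (u @ c # v)"
  using ins_del.ins[OF ins_del.refl] by simp

lemma subseq_del: "subseq w x \<Longrightarrow> ins_del 0 (length x - length w) x w"
proof (induction x arbitrary: w)
  case Nil then have "w = []" by simp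
  then show ?case using ins_del.refl by simp
next
  case (Cons a x)
  show ?case
  proof (cases w)
    case Nil
    have "subseq [] x" by simp
    from Cons.IH[OF this] have "ins_del 0 (length x) x []" by simp
    from ins_del_trans[OF this del_one[of "[]" a x, simplified]] show ?thesis using Nil by simp
  next
    case (Cons b w')
    show ?thesis
    proof (cases "a = b \<and> subseq w' x")
      case True
      with Cons.IH[of w'] have "ins_del 0 (length x - length w') x w'" by simp
      from ins_del_Cons[OF this, of a] show ?thesis using Cons True by simp
    next
      case False
      then have "subseq w x" using Cons.prems Cons by (auto split: if_splits)
      from Cons.IH[OF this] have h: "ins_del 0 (length x - length w) x w" .
      have "length w \<le> length x" using \<open>subseq w x\<close> list_emb_length by blast
      from ins_del_trans[OF h del_one[of "[]" a x, simplified]] show ?thesis using \<open>length w \<le> length x\<close>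
        by (simp add: Suc_diff_le)
    qed
  qed
qed

lemma ins_del_sym: "ins_del i j x y \<Longrightarrow> ins_del j i y x"
proof (induction rule: ins_del.induct)
  case (refl x) then show ?case by (rule ins_del.refl)
next
  case (ins i j x u v c)
  from ins_del_trans[OF ins.IH del_one[of u c v]] show ?case by simp
next
  case (del i j x u c v)
  from ins_del_trans[OF del.IH ins_one[of u v c]] show ?case by simp
qed

lemma subseq_del_one: "subseq w (u @ c # v) \<Longrightarrow>
   \<exists>w'. subseq w' w \<and> subseq w' (u @ v) \<and> length w \<le> Suc (length w')"
proof -
  assume "subseq w (u @ c # v)"
  then obtain w1 w2 where w: "w = w1 @ w2" "subseq w1 u" "subseq w2 (c # v)"
    by (rule subseq_appendE)
  show ?thesis
  proof (cases "subseq w2 v")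
    case True
    then show ?thesis using w by (intro exI[of _ w]) (auto intro: list_emb_append_mono)
  next
    case False
    then obtain w2' where "w2 = c # w2'" "subseq w2' v" using w(3)
      by (cases w2) (auto split: if_splits)
    then show ?thesis using w
      by (intro exI[of _ "w1 @ w2'"]) (auto intro: list_emb_append_mono)
  qed
qed

lemma ins_del_common: "ins_del i j x y \<Longrightarrow> \<exists>w. subseq w x \<and> subseq w y \<and> length x \<le> length w + j"
proof (induction rule: ins_del.induct)
  case (refl x) then show ?case by auto
next
  case (ins i j x u v c)
  then obtain w where "subseq w x" "subseq w (u @ v)" "length x \<le> length w + j" by blast
  moreover have "subseq (u @ v) (u @ c # v)" by (auto intro: list_emb_append_mono)
  ultimately show ?case by (meson subseq_order.trans)
next
  case (del i j x u c v)
  then obtain w where w: "subseq w x" "subseq w (u @ c # v)" "length x \<le> length w + j" by blast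
  from subseq_del_one[OF w(2)] obtain w' where "subseq w' w" "subseq w' (u @ v)" "length w \<le> Suc (length w')"
    by blast
  then show ?case using w by (intro exI[of _ w']) (auto intro: subseq_order.trans)
qed

lemma nths_subseq_mono: "{i\<in>A. i < length xs} \<subseteq> B \<Longrightarrow> subseq (nths xs A) (nths xs B)"
proof (induction xs arbitrary: A B)
  case Nil then show ?case by simp
next
  case (Cons a xs)
  have "{i\<in>{j. Suc j \<in> A}. i < length xs} \<subseteq> {j. Suc j \<in> B}" using Cons.prems by auto
  from Cons.IH[OF this] have "subseq (nths xs {j. Suc j \<in> A}) (nths xs {j. Suc j \<in> B})" .
  moreover have "0 \<in> A \<Longrightarrow> 0 \<in> B" using Cons.prems by auto
  ultimately show ?case by (auto simp: nths_Cons)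
qed

lemma lev_dist_le: assumes "subseq w x" "subseq w y"
  shows "lev_dist x y \<le> (length x - length w) + (length y - length w)"
proof -
  have "ins_del 0 (length x - length w) x w" by (rule subseq_del[OF assms(1)])
  moreover have "ins_del (length y - length w) 0 w y" by (rule ins_del_sym[OF subseq_del[OF assms(2)]])
  ultimately have "ins_del (length y - length w) (length x - length w) x y"
    using ins_del_trans by fastforce
  then have "\<exists>i j. i + j = (length x - length w) + (length y - length w) \<and> ins_del i j x y"
    by (intro exI[of _ "length y - length w"] exI[of _ "length x - length w"]) simp
  then show ?thesis unfolding lev_dist_def by (rule Least_le)
qed



lemma poly_step:
  fixes a t D s :: real
  assumes "t > 0" "t \<le> 1" "a \<ge> 0" "D \<ge> 0" "t^2 - D*(a+t) > 0" "s \<ge> t"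
  shows "(s-D)*(s+a)*(t^2 - D*(a+t)) \<le> (1-D)*(1+a)*(s^2 - D*(s+a))"
proof -
  define G where "G = t^2 - D*(a+t)"
  define P where "P = (1-D)*(1+a) - G"
  define F where "F = (\<lambda>x. (1-D)*(1+a)*(x^2 - D*(x+a)) - (x-D)*(x+a)*G)"
  have Gp: "G > 0" using assms G_def by simp
  have Dt: "D < t"
  proof -
    have "D*t \<le> D*(a+t)" using assms by (simp add: mult_left_mono)
    then have "D*t < t*t" using Gp G_def by (simp add: power2_eq_square)
    then show ?thesis using assms(1) by simp
  qed
  have e1: "F s - F t = (s-t)*(P*(s+t) - D*(1-D)*(1+a) - G*(a-D))"
    unfolding F_def P_def by (simp add: algebra_simps power2_eq_square)
  have e2: "P = a + (1-t)*(1+t-D)" unfolding P_def G_def by (simp add: algebra_simps power2_eq_square)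
  have e3: "F t = G*((1-D)*(1+a) - (t-D)*(t+a))" unfolding F_def G_def by (simp add: algebra_simps)
  have Pn: "P \<ge> 0" using e2 assms Dt by (simp add: mult_nonneg_nonneg)
  have "2*t - D - G \<ge> t"
  proof -
    have "D*(1-t) \<le> t*(1-t)" using Dt assms by (simp add: mult_right_mono)
    moreover have "D*a \<ge> 0" using assms by simp
    ultimately show ?thesis unfolding G_def by (simp add: algebra_simps power2_eq_square)
  qed
  then have "a*(2*t - D - G) \<ge> 0" using assms by simp
  moreover have "(2*t-D)*(1-t)*(1+t-D) \<ge> 0" using assms Dt by simp
  ultimately have "a*(2*t - D - G) + (2*t-D)*(1-t)*(1+t-D) \<ge> 0" by linarith
  moreover have "(2*t-D)*P - G*a = a*(2*t - D - G) + (2*t-D)*(1-t)*(1+t-D)"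
    unfolding e2 G_def by (simp add: algebra_simps power2_eq_square)
  ultimately have b0: "(2*t-D)*P - G*a \<ge> 0" by linarith
  have "P*(s-t) \<ge> 0" using Pn assms by simp
  moreover have "P*(s+t) - D*(1-D)*(1+a) - G*(a-D) - ((2*t-D)*P - G*a) = P*(s-t)"
    unfolding P_def by (simp add: algebra_simps)
  ultimately have "P*(s+t) - D*(1-D)*(1+a) - G*(a-D) \<ge> (2*t-D)*P - G*a" by linarith
  with b0 have "(s-t)*(P*(s+t) - D*(1-D)*(1+a) - G*(a-D)) \<ge> 0" using assms by simp
  then have f1: "F s \<ge> F t" using e1 by linarith
  have "(t-D)*(t+a) \<le> (1-D)*(1+a)" using assms Dt by (intro mult_mono) auto
  then have "F t \<ge> 0" using e3 Gp by simp
  with f1 have "F s \<ge> 0" by linarith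
  then show ?thesis unfolding F_def G_def by simp
qed

lemma real_main:
  fixes a t D s mu L T :: real
  assumes "t > 0" "t \<le> 1" "a \<ge> 0" "D \<ge> 0" "t^2 - D*(a+t) > 0" "L \<ge> 2" "mu > 0"
    "T \<ge> L*s" "s \<ge> t" "mu \<le> s + a"
    "\<And>lam. 2*lam*T - lam^2*mu \<le> T + L*(L-1)*D"
  shows "L*(t^2 - D*(a+t)) \<le> (1-D)*(1+a)"
proof (rule ccontr)
  define G where "G = t^2 - D*(a+t)"
  assume "\<not> ?thesis"
  then have LG: "L*G > (1-D)*(1+a)" unfolding G_def by simp
  have Gp: "G > 0" using assms(1-10) G_def by simp
  have Dt: "D < t"
  proof -
    have "D*t \<le> D*(a+t)" using assms(1-10) by (simp add: mult_left_mono)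
    then have "D*t < t*t" using Gp G_def by (simp add: power2_eq_square)
    then show ?thesis using assms(1) by simp
  qed
  have sp: "s > 0" using assms(1-10) by simp
  have step1: "2*L*s \<ge> mu"
  proof (cases "a \<le> 3*t")
    case True
    have "2*L*s \<ge> 2*2*s" using assms(6) sp by (intro mult_right_mono) auto
    then show ?thesis using assms(1-10) True by linarith
  next
    case False
    have "(2*L-1)*t \<ge> a"
    proof (rule ccontr)
      assume "\<not> ?thesis"
      then have "2*(L*t) < a + t" by (simp add: algebra_simps)
      then have "L*t < a" using False assms(1) by linarith
      have "G \<le> t^2" using G_def assms(1-10) by simp
      then have "L*G \<le> L*t^2" using assms(1-10) by (simp add: mult_left_mono)
      then have h1: "(1-D)*(1+a) < L*t^2" using LG by linarith
      have "D*(a+t) < t^2" using Gp G_def by simp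
      then have h2: "(1-D)*(a+t) > a + t - t^2" by (simp add: algebra_simps)
      have "t - t^2 \<ge> 0" using assms(1-10) by (simp add: power2_eq_square)
      then have h3: "(1-D)*(a+t) > a" using h2 by linarith
      have "(1-D)*(1+a)*(a+t) < L*t^2*(a+t)" using h1 assms(1-10) by (simp add: mult_strict_right_mono)
      moreover have "L*t^2*(a+t) = (L*t)*t*(a+t)" by (simp add: power2_eq_square)
      moreover have "(L*t)*t*(a+t) \<le> a*t*(a+t)" using \<open>L*t < a\<close> assms(1-10)
        by (intro mult_right_mono) auto
      moreover have "a*t*(a+t) \<le> a*(1+a)"
      proof -
        have "t*(a+t) \<le> 1*(1+a)" using assms(1-10) by (intro mult_mono) auto
        then show ?thesis using assms(1-10) by (simp add: mult_left_mono mult.assoc)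
      qed
      moreover have "a*(1+a) \<le> (1-D)*(a+t)*(1+a)" using h3 assms(1-10) by (simp add: mult_right_mono)
      ultimately show False by (simp add: algebra_simps)
    qed
    moreover have "(2*L-1)*s \<ge> (2*L-1)*t" using assms(1-10) by (intro mult_left_mono) auto
    ultimately show ?thesis using assms(1-10) by (simp add: algebra_simps)
  qed
  define lam where "lam = L*s/mu"
  have "2*lam*T - lam^2*mu \<le> T + L*(L-1)*D" by (rule assms(11))
  moreover have "2*lam - 1 \<ge> 0"
  proof -
    have "2*lam = 2*L*s/mu" unfolding lam_def by simp
    also have "\<dots> \<ge> 1" using step1 assms(7) by simp
    finally show ?thesis by simp
  qed
  then have "(2*lam - 1)*T \<ge> (2*lam-1)*(L*s)" using assms(1-10) by (intro mult_left_mono) auto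
  ultimately have "(2*lam-1)*(L*s) - lam^2*mu \<le> L*(L-1)*D" by (simp add: algebra_simps)
  moreover have "(2*lam-1)*(L*s) - lam^2*mu = L*(L*s^2/mu - s)"
    unfolding lam_def using assms(7) by (simp add: field_simps power2_eq_square)
  ultimately have "L*(L*s^2/mu - s) \<le> L*((L-1)*D)" by simp
  then have "L*s^2/mu - s \<le> (L-1)*D" by (rule mult_left_le_imp_le) (use assms(6) in linarith)
  moreover have "L*(s^2/mu - D) = L*s^2/mu - L*D" by (simp add: right_diff_distrib)
  moreover have "(L-1)*D = L*D - D" by (simp add: left_diff_distrib)
  ultimately have st2: "L*(s^2/mu - D) \<le> s - D" by linarith
  have "s^2/(s+a) \<le> s^2/mu" using assms(1-10) by (intro divide_left_mono) auto
  then have "L*(s^2/(s+a) - D) \<le> L*(s^2/mu - D)" using assms(1-10) by (intro mult_left_mono) auto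
  with st2 have "L*(s^2/(s+a) - D) \<le> s - D" by linarith
  then have "L*(s^2/(s+a) - D)*(s+a) \<le> (s - D)*(s+a)" using assms(1-10) sp
    by (intro mult_right_mono) auto
  moreover have "L*(s^2/(s+a) - D)*(s+a) = L*(s^2 - D*(s+a))" using assms(3) sp
    by (simp add: field_simps)
  ultimately have st3: "L*(s^2 - D*(s+a)) \<le> (s - D)*(s+a)" by simp
  have st4: "(s-D)*(s+a)*G \<le> (1-D)*(1+a)*(s^2 - D*(s+a))"
    unfolding G_def using poly_step assms(1-10) by blast
  have pos: "(s-D)*(s+a)*G > 0" using Dt assms(1-10) sp Gp by simp
  define H where "H = s^2 - D*(s+a)"
  have Hp: "H > 0"
  proof (rule ccontr)
    assume "\<not> H > 0"
    then have "(1-D)*(1+a)*H \<le> 0" using Dt assms(1-10)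
      by (intro mult_nonneg_nonpos) auto
    with st4 pos show False unfolding H_def by linarith
  qed
  have "(1-D)*(1+a)*H < L*G*H" using LG Hp by simp
  moreover have "L*H*G \<le> (s-D)*(s+a)*G" using st3 Gp unfolding H_def by (simp add: mult_right_mono)
  ultimately show False using st4 unfolding H_def by (simp add: algebra_simps)
qed



lemma ind_sum: "S' \<subseteq> {..<(m::nat)} \<Longrightarrow> (\<Sum>x<m. if x \<in> S' then 1 else 0 :: real) = real (card S')"
proof -
  assume h: "S' \<subseteq> {..<m}"
  have "(\<Sum>x<m. if x \<in> S' then 1 else 0 :: real) = (\<Sum>x\<in>{..<m} \<inter> S'. 1)"
    using sum.inter_restrict[of "{..<m}" "\<lambda>_. (1::real)" S'] by simp
  also have "{..<m} \<inter> S' = S'" using h by blast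
  finally show ?thesis by simp
qed

lemma count_ineq:
  fixes B :: "'b set" and S :: "'b \<Rightarrow> nat set" and m :: nat and K lam :: real
  assumes fin: "finite B" and sub: "\<forall>c\<in>B. S c \<subseteq> {..<m}"
    and inter: "\<forall>c\<in>B. \<forall>c'\<in>B. c \<noteq> c' \<longrightarrow> real (card (S c \<inter> S c')) \<le> K"
  shows "2*lam*(\<Sum>c\<in>B. real (card (S c))) - lam^2*real m
     \<le> (\<Sum>c\<in>B. real (card (S c))) + real (card B)*(real (card B)-1)*K"
proof -
  define T where "T = (\<Sum>c\<in>B. real (card (S c)))"
  define L where "L = real (card B)"
  define r where "r = (\<lambda>x. (\<Sum>c\<in>B. if x \<in> S c then 1 else 0 :: real))"
  have h1: "(\<Sum>x<m. r x) = T"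
  proof -
    have "(\<Sum>x<m. r x) = (\<Sum>c\<in>B. \<Sum>x<m. if x \<in> S c then 1 else 0 :: real)"
      unfolding r_def by (rule sum.swap)
    also have "\<dots> = T" unfolding T_def using sub by (intro sum.cong) (auto simp: ind_sum)
    finally show ?thesis .
  qed
  have h2: "(\<Sum>x<m. (r x)^2) = (\<Sum>c\<in>B. \<Sum>c'\<in>B. real (card (S c \<inter> S c')))"
  proof -
    have "(\<Sum>x<m. (r x)^2) = (\<Sum>x<m. \<Sum>c\<in>B. \<Sum>c'\<in>B. if x \<in> S c \<inter> S c' then 1 else 0 :: real)"
      unfolding r_def power2_eq_square sum_product by (intro sum.cong) auto
    also have "\<dots> = (\<Sum>c\<in>B. \<Sum>x<m. \<Sum>c'\<in>B. if x \<in> S c \<inter> S c' then 1 else 0 :: real)"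
      by (rule sum.swap)
    also have "\<dots> = (\<Sum>c\<in>B. \<Sum>c'\<in>B. \<Sum>x<m. if x \<in> S c \<inter> S c' then 1 else 0 :: real)"
      by (rule sum.cong[OF HOL.refl], rule sum.swap)
    also have "\<dots> = (\<Sum>c\<in>B. \<Sum>c'\<in>B. real (card (S c \<inter> S c')))"
      using sub by (intro sum.cong HOL.refl ind_sum) blast
    finally show ?thesis .
  qed
  have h3: "(\<Sum>c\<in>B. \<Sum>c'\<in>B. real (card (S c \<inter> S c'))) \<le> T + L*(L-1)*K"
  proof -
    have "(\<Sum>c'\<in>B. real (card (S c \<inter> S c'))) \<le> real (card (S c)) + (L-1)*K" if c: "c \<in> B" for c
    proof -
      have "(\<Sum>c'\<in>B. real (card (S c \<inter> S c'))) = real (card (S c \<inter> S c)) + (\<Sum>c'\<in>B-{c}. real (card (S c \<inter> S c')))"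
        using fin c by (simp add: sum.remove)
      moreover have "(\<Sum>c'\<in>B-{c}. real (card (S c \<inter> S c'))) \<le> real (card (B-{c})) * K"
        using inter c by (intro sum_bounded_above) auto
      moreover have "real (card (B-{c})) = L - 1"
      proof -
        have "card B \<ge> 1" using fin c by (auto simp: Suc_le_eq card_gt_0_iff)
        then show ?thesis unfolding L_def using fin c by (simp add: card_Diff_singleton of_nat_diff)
      qed
      ultimately show ?thesis by simp
    qed
    then have "(\<Sum>c\<in>B. \<Sum>c'\<in>B. real (card (S c \<inter> S c'))) \<le> (\<Sum>c\<in>B. real (card (S c)) + (L-1)*K)"
      by (rule sum_mono)
    also have "\<dots> = T + L*(L-1)*K" unfolding T_def L_def by (simp add: sum.distrib)
    finally show ?thesis .
  qed
  have "0 \<le> (\<Sum>x<m. (r x - lam)^2)" by (intro sum_nonneg) auto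
  also have "\<dots> = (\<Sum>x<m. ((r x)^2 - 2*lam*r x) + lam^2)"
    by (intro sum.cong HOL.refl) (simp add: power2_diff mult.commute mult.left_commute)
  also have "\<dots> = (\<Sum>x<m. (r x)^2) - 2*lam*(\<Sum>x<m. r x) + lam^2*real m"
    by (simp add: sum.distrib sum_subtractf sum_distrib_left)
  finally have "0 \<le> (\<Sum>x<m. (r x)^2) - 2*lam*(\<Sum>x<m. r x) + lam^2*real m" .
  then have "0 \<le> (\<Sum>c\<in>B. \<Sum>c'\<in>B. real (card (S c \<inter> S c'))) - 2*lam*T + lam^2*real m" unfolding h1 h2 .
  then show ?thesis using h3 unfolding T_def L_def by linarith
qed



lemma nat_floor_le: "(x::real) \<ge> 0 \<Longrightarrow> real (nat \<lfloor>x\<rfloor>) \<le> x"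
  by (simp add: of_nat_nat)  

lemma per_codeword:
  assumes "ins_del i j v c"
  shows "\<exists>S. S \<subseteq> {..<length v} \<and> subseq (nths v S) c \<and> length v \<le> card S + j
            \<and> length v + i = length c + j"
proof -
  from ins_del_common[OF assms] obtain w where w: "subseq w v" "subseq w c" "length v \<le> length w + j"
    by blast
  from w(1) obtain N where N: "w = nths v N" by (auto simp: subseq_conv_nths)
  define S where "S = {k. k < length v \<and> k \<in> N}"
  have "card S = length w" unfolding S_def N by (simp add: length_nths)
  moreover have "subseq (nths v S) w" unfolding N by (rule nths_subseq_mono) (auto simp: S_def)
  ultimately show ?thesis using w ins_del_len[OF assms]
    by (intro exI[of _ S]) (auto simp: S_def intro: subseq_order.trans)
qed

theorem mainTheorem4:
  fixes tauI tauD \<delta> :: real and n :: nat and C :: "('a::finite) list set"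
  assumes "0 \<le> tauI" and "0 \<le> tauD" and "tauD < 1"
    and "C \<subseteq> {x. length x = n}" and "card C \<ge> 2"
    and "real (min_lev_dist C) = 2 * \<delta> * real n"
    and "\<delta> > delta_ID tauI tauD"
  shows "list_decodable C (nat \<lfloor>tauI * real n\<rfloor>) (nat \<lfloor>tauD * real n\<rfloor>)
           (nat \<lfloor>\<delta> * (tauI + 1) / ((\<delta> - delta_ID tauI tauD) * (tauI + 1 - tauD))\<rfloor>)"
proof -
  note a0 = assms(1) and d0 = assms(2) and d1 = assms(3) and Cn = assms(4) and C2 = assms(5)
    and md = assms(6) and dgt = assms(7)
  define tI where "tI = nat \<lfloor>tauI * real n\<rfloor>"
  define tD where "tD = nat \<lfloor>tauD * real n\<rfloor>"
  define G where "G = (\<delta> - delta_ID tauI tauD) * (tauI + 1 - tauD)"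
  define lr where "lr = \<delta> * (tauI + 1) / G"
  have tIle: "real tI \<le> tauI * real n" unfolding tI_def by (rule nat_floor_le) (use a0 in simp)
  have tDle: "real tD \<le> tauD * real n" unfolding tD_def by (rule nat_floor_le) (use d0 in simp)
  have den: "tauI + 1 - tauD > 0" using a0 d1 by linarith
  have Geq: "G = (1-tauD)^2 - (1-\<delta>)*(tauI + (1-tauD))"
    unfolding G_def delta_ID_def using den by (simp add: field_simps power2_eq_square)
  have Gp: "G > 0" unfolding G_def using dgt den by simp
  have dIDnn: "delta_ID tauI tauD \<ge> 0" unfolding delta_ID_def using a0 d0 d1 den by simp
  have dpos: "\<delta> > 0" using dgt dIDnn by linarith
  have finC: "finite C"
    by (rule finite_subset[OF Cn]) (use finite_lists_length_eq[of "UNIV::'a set" n] in simp)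
  have n1: "n \<ge> 1"
  proof (rule ccontr)
    assume "\<not> n \<ge> 1"
    then have "n = 0" by simp
    then have "C \<subseteq> {[]}" using Cn by auto
    then have "card C \<le> card {[]::'a list}" by (intro card_mono) auto
    then have "card C \<le> 1" by simp
    with C2 show False by simp
  qed
  have npos: "real n > 0" using n1 by simp
  have lr1: "lr \<ge> 1"
  proof -
    have e: "\<delta> * (tauI + 1) - G = tauD + tauI + \<delta>*tauD - tauD*tauD"
      unfolding Geq by (simp add: algebra_simps power2_eq_square)
    have "tauD*tauD \<le> tauD*1" using d0 d1 by (intro mult_left_mono) auto
    moreover have "\<delta>*tauD \<ge> 0" using dpos d0 by simp
    ultimately have "G \<le> \<delta> * (tauI + 1)" using e a0 by linarith
    then show ?thesis unfolding lr_def using Gp by simp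
  qed
  have mld: "min_lev_dist C \<le> lev_dist c c'" if "c \<in> C" "c' \<in> C" "c \<noteq> c'" for c c'
  proof -
    have "finite {lev_dist c1 c2 | c1 c2. c1 \<in> C \<and> c2 \<in> C \<and> c1 \<noteq> c2}"
    proof -
      have "{lev_dist c1 c2 | c1 c2. c1 \<in> C \<and> c2 \<in> C \<and> c1 \<noteq> c2} \<subseteq> (\<lambda>p. lev_dist (fst p) (snd p)) ` (C \<times> C)"
      proof
        fix x assume "x \<in> {lev_dist c1 c2 | c1 c2. c1 \<in> C \<and> c2 \<in> C \<and> c1 \<noteq> c2}"
        then obtain c1 c2 where "x = lev_dist c1 c2" "c1 \<in> C" "c2 \<in> C" by blast
        then show "x \<in> (\<lambda>p. lev_dist (fst p) (snd p)) ` (C \<times> C)"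
          by (intro image_eqI[of _ _ "(c1,c2)"]) auto
      qed
      then show ?thesis using finC by (meson finite_SigmaI finite_imageI finite_subset)
    qed
    then show ?thesis unfolding min_lev_dist_def by (rule Min_le) (use that in blast)
  qed
  show ?thesis unfolding list_decodable_def tI_def[symmetric] tD_def[symmetric] lr_def[symmetric] G_def[symmetric]
  proof
    fix v :: "'a list"
    define B where "B = lev_ball v tD tI \<inter> C"
    define m where "m = length v"
    have finB: "finite B" unfolding B_def using finC by simp
    have "\<forall>c\<in>B. \<exists>S. S \<subseteq> {..<m} \<and> subseq (nths v S) c \<and> real (card S) \<ge> real n * (1 - tauD)
           \<and> real (card S) \<ge> real m - tauI * real n"
    proof
      fix c assume "c \<in> B"
      then obtain i j where ij: "i \<le> tD" "j \<le> tI" "ins_del i j v c" "c \<in> C"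
        unfolding B_def lev_ball_def by auto
      have lc: "length c = n" using ij(4) Cn by auto
      from per_codeword[OF ij(3)] obtain S where S: "S \<subseteq> {..<m}" "subseq (nths v S) c"
        "m \<le> card S + j" "m + i = n + j" unfolding m_def lc by blast
      have r1: "real m \<le> real (card S) + real j" "real m + real i = real n + real j"
        using S(3,4) by linarith+
      have "real i \<le> tauD * real n" "real j \<le> tauI * real n" using ij tIle tDle by linarith+
      then show "\<exists>S. S \<subseteq> {..<m} \<and> subseq (nths v S) c \<and> real (card S) \<ge> real n * (1 - tauD)
           \<and> real (card S) \<ge> real m - tauI * real n"
        using S r1 by (intro exI[of _ S]) (auto simp: algebra_simps)
    qed
    then obtain S where S: "\<And>c. c \<in> B \<Longrightarrow> S c \<subseteq> {..<m}" "\<And>c. c \<in> B \<Longrightarrow> subseq (nths v (S c)) c"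
      "\<And>c. c \<in> B \<Longrightarrow> real (card (S c)) \<ge> real n * (1 - tauD)"
      "\<And>c. c \<in> B \<Longrightarrow> real (card (S c)) \<ge> real m - tauI * real n"
      by metis
    have inter: "real (card (S c \<inter> S c')) \<le> real n * (1 - \<delta>)" if "c \<in> B" "c' \<in> B" "c \<noteq> c'" for c c'
    proof -
      define w where "w = nths v (S c \<inter> S c')"
      have "subseq w (nths v (S c))" unfolding w_def by (rule nths_subseq_mono) auto
      then have w1: "subseq w c" using S(2)[OF that(1)] by (rule subseq_order.trans)
      have "subseq w (nths v (S c'))" unfolding w_def by (rule nths_subseq_mono) auto
      then have w2: "subseq w c'" using S(2)[OF that(2)] by (rule subseq_order.trans)
      have lw: "length w = card (S c \<inter> S c')"
      proof -
        have "{i. i < length v \<and> i \<in> S c \<inter> S c'} = S c \<inter> S c'" using S(1)[OF that(1)] unfolding m_def by auto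
        then show ?thesis unfolding w_def by (simp add: length_nths)
      qed
      have cC: "c \<in> C" "c' \<in> C" using that unfolding B_def by auto
      have lc: "length c = n" "length c' = n" using cC Cn by auto
      have "length w \<le> n" using list_emb_length[OF w1] lc by simp
      have "lev_dist c c' \<le> (n - length w) + (n - length w)" using lev_dist_le[OF w1 w2] lc by simp
      moreover have "min_lev_dist C \<le> lev_dist c c'" using mld cC that(3) by blast
      ultimately have "min_lev_dist C \<le> 2 * (n - length w)" by simp
      then have "real (min_lev_dist C) \<le> 2 * (real n - real (length w))" using \<open>length w \<le> n\<close>
        by (simp add: of_nat_diff)
      then show ?thesis using md lw by (simp add: algebra_simps)
    qed
    show "card B \<le> nat \<lfloor>lr\<rfloor>"
    proof (cases "card B \<le> 1")
      case True
      have "1 \<le> \<lfloor>lr\<rfloor>" using lr1 by simp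
      then show ?thesis using True by linarith
    next
      case False
      then have L2: "real (card B) \<ge> 2" by simp
      obtain c1 c2 where c12: "c1 \<in> B" "c2 \<in> B" "c1 \<noteq> c2"
        using False by (metis One_nat_def card_le_Suc0_iff_eq finB not_less_eq_eq)
      have "0 \<le> real n * (1 - \<delta>)" using inter[OF c12] by linarith
      then have dle1: "\<delta> \<le> 1" using npos by (simp add: zero_le_mult_iff)
      define T where "T = (\<Sum>c\<in>B. real (card (S c)))"
      define s where "s = max (1 - tauD) (real m / real n - tauI)"
      have Ts: "T / real n \<ge> real (card B) * s"
      proof -
        have "real (card (S c)) \<ge> real n * s" if "c \<in> B" for c
        proof -
          have "real n * (real m / real n - tauI) = real m - tauI * real n" using npos by (simp add: field_simps)
          then show ?thesis unfolding s_def using S(3,4)[OF that] by (simp add: max_def)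
        qed
        then have "T \<ge> real (card B) * (real n * s)" unfolding T_def
          using sum_bounded_below[of B "real n * s" "\<lambda>c. real (card (S c))"] by simp
        then show ?thesis using npos by (simp add: field_simps)
      qed
      have mpos: "m > 0"
      proof (rule ccontr)
        assume "\<not> m > 0"
        then have "S c1 = {}" using S(1)[OF c12(1)] by auto
        then have "real n * (1 - tauD) \<le> 0" using S(3)[OF c12(1)] by simp
        moreover have "real n * (1 - tauD) > 0" using npos d1 by simp
        ultimately show False by simp
      qed
      have CS: "2*lam*(T / real n) - lam^2*(real m / real n) \<le> T / real n + real (card B)*(real (card B)-1)*(1-\<delta>)"
        for lam
      proof -
        have "2*lam*T - lam^2*real m \<le> T + real (card B)*(real (card B)-1)*(real n * (1-\<delta>))"
          unfolding T_def using count_ineq[OF finB, of S m "real n * (1 - \<delta>)" lam] S(1) inter by blast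
        then have "(2*lam*T - lam^2*real m) / real n \<le> (T + real (card B)*(real (card B)-1)*(real n * (1-\<delta>))) / real n"
          using npos by (simp add: divide_right_mono)
        then show ?thesis using npos by (simp add: field_simps)
      qed
      have "real (card B) * ((1-tauD)^2 - (1-\<delta>)*(tauI + (1-tauD))) \<le> (1-(1-\<delta>))*(1+tauI)"
      proof (rule real_main[where s = s and mu = "real m / real n" and T = "T / real n"])
        show "0 < 1 - tauD" using d1 by simp
        show "1 - tauD \<le> 1" using d0 by simp
        show "0 \<le> tauI" by (rule a0)
        show "0 \<le> 1 - \<delta>" using dle1 by simp
        show "0 < (1-tauD)^2 - (1-\<delta>)*(tauI + (1-tauD))" using Gp Geq by simp
        show "2 \<le> real (card B)" by (rule L2)
        show "0 < real m / real n" using mpos npos by simp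
        show "real (card B) * s \<le> T / real n" by (rule Ts)
        show "1 - tauD \<le> s" unfolding s_def by simp
        show "real m / real n \<le> s + tauI" unfolding s_def by simp
        show "\<And>lam. 2*lam*(T/real n) - lam^2*(real m/real n) \<le> T/real n + real (card B)*(real (card B)-1)*(1-\<delta>)"
          by (rule CS)
      qed
      then have "real (card B) * G \<le> \<delta> * (tauI + 1)" unfolding Geq by (simp add: algebra_simps)
      then have "real (card B) \<le> lr" unfolding lr_def using Gp by (simp add: pos_le_divide_eq)
      then have "int (card B) \<le> \<lfloor>lr\<rfloor>" by (simp add: le_floor_iff)
      then show ?thesis by linarith
    qed
  qed
qed


end
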